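(* Let $\ell\ge2$ be an integer, let $G$ be a torsion-free group written multiplicatively with identity $1$, and let $A_1,\dots,A_\ell$ be nonempty finite subsets of $G$ with $|A_i|\ge2$ for each $i\in[1,\ell]$. Suppose \[ |A_1A_2\cdots A_\ell|=|A_1|+\cdots+|A_\ell|-\ell+1 . \] Then there exist $g\in G$ with $g\neq1$ and $\alpha_i,\beta_i\in G$ such that for each $i\in[1,\ell]$ the set $A_i$ is a geometric progression of type $(\alpha_i,g,\beta_i)$, and $\alpha_{i+1}=\beta_i^{-1}$ for each $i\in[1,\ell-1]$.
   Context: $A_1\cdots A_\ell=\{a_1\cdots a_\ell: a_i\in A_i\}$. A nonempty finite set $B\subseteq G$ is a geometric progression of type $(a,g,b)$ ($a,b,g\in G$, $g\ne1$) if $B=\{ab,agb,\dots,ag^{|B|-1}b\}$. *)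

theory Defs
  imports "HOL-Algebra.Algebra"
begin

definition torsion_free :: "('a, 'b) monoid_scheme \<Rightarrow> bool" where
  "torsion_free G \<longleftrightarrow>
     (\<forall>x\<in>carrier G. \<forall>n::nat. n > 0 \<longrightarrow> x [^]\<^bsub>G\<^esub> n = \<one>\<^bsub>G\<^esub> \<longrightarrow> x = \<one>\<^bsub>G\<^esub>)"

fun prod_sets :: "('a, 'b) monoid_scheme \<Rightarrow> (nat \<Rightarrow> 'a set) \<Rightarrow> nat \<Rightarrow> 'a set" where
  "prod_sets G A 0 = {\<one>\<^bsub>G\<^esub>}"
| "prod_sets G A (Suc n) = set_mult G (prod_sets G A n) (A (Suc n))"

definition geom_prog :: "('a, 'b) monoid_scheme \<Rightarrow> 'a set \<Rightarrow> 'a \<Rightarrow> 'a \<Rightarrow> 'a \<Rightarrow> bool" where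
  "geom_prog G B a g b \<longleftrightarrow>
     a \<in> carrier G \<and> g \<in> carrier G \<and> b \<in> carrier G \<and> g \<noteq> \<one>\<^bsub>G\<^esub> \<and>
     finite B \<and> B \<noteq> {} \<and>
     B = {a \<otimes>\<^bsub>G\<^esub> (g [^]\<^bsub>G\<^esub> k) \<otimes>\<^bsub>G\<^esub> b | k::nat. k < card B}"

end

theory Submission
  imports Defs
begin

locale tfg = group G for G (structure) +
  assumes tf: "torsion_free G"
begin

lemma lcancel: "x \<in> carrier G \<Longrightarrow> y \<in> carrier G \<Longrightarrow> z \<in> carrier G \<Longrightarrow> (x \<otimes> y = x \<otimes> z) = (y = z)"
  by simp

lemma pow_one_imp: "x \<in> carrier G \<Longrightarrow> n > 0 \<Longrightarrow> x [^] (n::nat) = \<one> \<Longrightarrow> x = \<one>"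
  using tf unfolding torsion_free_def by blast

lemma pow_inj_lt: assumes "x \<in> carrier G" "x \<noteq> \<one>" "x [^] (i::nat) = x [^] (j::nat)" "i < j"
  shows False
proof -
  have "x [^] i \<otimes> x [^] (j - i) = x [^] j" using assms(1,4) by (simp add: nat_pow_mult)
  then have "x [^] i \<otimes> x [^] (j - i) = x [^] i" using assms(3) by simp
  then have "x [^] (j - i) = \<one>" using assms(1) by simp
  then show False using pow_one_imp[of x "j - i"] assms by simp
qed

lemma pow_inj: assumes "x \<in> carrier G" "x \<noteq> \<one>" "x [^] (i::nat) = x [^] (j::nat)"
  shows "i = j"
  using pow_inj_lt[OF assms(1,2)] assms(3) by (metis linorder_neqE_nat)

lemma smult_iff: "x \<in> A <#> B \<longleftrightarrow> (\<exists>a\<in>A. \<exists>b\<in>B. x = a \<otimes> b)"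
  unfolding set_mult_def by auto

lemma smultI: "a \<in> A \<Longrightarrow> b \<in> B \<Longrightarrow> x = a \<otimes> b \<Longrightarrow> x \<in> A <#> B"
  unfolding smult_iff by blast

lemma smult_image: "A <#> B = (\<lambda>(a,b). a \<otimes> b) ` (A \<times> B)"
  unfolding set_mult_def by auto

lemma smult_finite: "finite A \<Longrightarrow> finite B \<Longrightarrow> finite (A <#> B)"
  unfolding smult_image by simp

lemma smult_carrier: "A \<subseteq> carrier G \<Longrightarrow> B \<subseteq> carrier G \<Longrightarrow> A <#> B \<subseteq> carrier G"
  by (auto simp: smult_iff; meson m_closed subsetD)

lemma smult_ne: "A \<noteq> {} \<Longrightarrow> B \<noteq> {} \<Longrightarrow> A <#> B \<noteq> {}"
  by (auto simp: smult_image)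

lemma smult_mono: "A \<subseteq> A' \<Longrightarrow> B \<subseteq> B' \<Longrightarrow> A <#> B \<subseteq> A' <#> B'"
  unfolding set_mult_def by blast

lemma card_lt: "A \<subseteq> carrier G \<Longrightarrow> h \<in> carrier G \<Longrightarrow> card ((\<lambda>z. h \<otimes> z) ` A) = card A"
  by (rule card_image, rule inj_onI) (metis lcancel subsetD)

lemma card_rt: "A \<subseteq> carrier G \<Longrightarrow> h \<in> carrier G \<Longrightarrow> card ((\<lambda>z. z \<otimes> h) ` A) = card A"
  by (rule card_image, rule inj_onI) (metis right_cancel subsetD)

lemma lt_carrier: "A \<subseteq> carrier G \<Longrightarrow> h \<in> carrier G \<Longrightarrow> (\<lambda>z. h \<otimes> z) ` A \<subseteq> carrier G"
  by auto

lemma rt_carrier: "A \<subseteq> carrier G \<Longrightarrow> h \<in> carrier G \<Longrightarrow> (\<lambda>z. z \<otimes> h) ` A \<subseteq> carrier G"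
  by auto

lemma lt_smult: assumes "A \<subseteq> carrier G" "B \<subseteq> carrier G" "h \<in> carrier G" shows
   "((\<lambda>z. h \<otimes> z) ` A) <#> B = (\<lambda>z. h \<otimes> z) ` (A <#> B)"
proof safe
  fix x assume "x \<in> (\<lambda>z. h \<otimes> z) ` A <#> B"
  then obtain a b where ab: "a\<in>A" "b\<in>B" "x = (h \<otimes> a) \<otimes> b" by (auto simp: smult_iff)
  then have "x = h \<otimes> (a \<otimes> b)" using assms m_assoc by (meson subsetD)
  moreover have "a \<otimes> b \<in> A <#> B" using ab by (auto simp: smult_iff)
  ultimately show "x \<in> (\<lambda>z. h \<otimes> z) ` (A <#> B)" by blast
next
  fix x assume "x \<in> A <#> B"
  then obtain a b where ab: "a\<in>A" "b\<in>B" "x = a \<otimes> b" by (auto simp: smult_iff)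
  then have "h \<otimes> x = (h \<otimes> a) \<otimes> b" using assms m_assoc by (metis subsetD)
  moreover have "h \<otimes> a \<in> (\<lambda>z. h \<otimes> z) ` A" using ab by blast
  ultimately show "h \<otimes> x \<in> (\<lambda>z. h \<otimes> z) ` A <#> B" using ab(2) by (metis smultI)
qed

lemma rt_smult: assumes "A \<subseteq> carrier G" "B \<subseteq> carrier G" "h \<in> carrier G" shows
   "A <#> ((\<lambda>z. z \<otimes> h) ` B) = (\<lambda>z. z \<otimes> h) ` (A <#> B)"
proof safe
  fix x assume "x \<in> A <#> (\<lambda>z. z \<otimes> h) ` B"
  then obtain a b where ab: "a\<in>A" "b\<in>B" "x = a \<otimes> (b \<otimes> h)" by (auto simp: smult_iff)
  then have "x = (a \<otimes> b) \<otimes> h" using assms m_assoc by (metis subsetD)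
  moreover have "a \<otimes> b \<in> A <#> B" using ab by (auto simp: smult_iff)
  ultimately show "x \<in> (\<lambda>z. z \<otimes> h) ` (A <#> B)" by blast
next
  fix x assume "x \<in> A <#> B"
  then obtain a b where ab: "a\<in>A" "b\<in>B" "x = a \<otimes> b" by (auto simp: smult_iff)
  then have "x \<otimes> h = a \<otimes> (b \<otimes> h)" using assms m_assoc by (metis subsetD)
  moreover have "b \<otimes> h \<in> (\<lambda>z. z \<otimes> h) ` B" using ab by blast
  ultimately show "x \<otimes> h \<in> A <#> (\<lambda>z. z \<otimes> h) ` B" using ab(1) by (metis smultI)
qed

lemma lt_ne: assumes "finite A" "A \<noteq> {}" "A \<subseteq> carrier G" "h \<in> carrier G" "h \<noteq> \<one>"
  shows "(\<lambda>z. h \<otimes> z) ` A \<noteq> A"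
proof
  assume eq: "(\<lambda>z. h \<otimes> z) ` A = A"
  obtain a where a: "a \<in> A" using assms(2) by blast
  have aG: "a \<in> carrier G" using a assms(3) by blast
  have mem: "h [^] n \<otimes> a \<in> A" for n::nat
  proof (induction n)
    case 0 then show ?case using a aG by simp
  next
    case (Suc n)
    have "h \<otimes> (h [^] n \<otimes> a) \<in> A" using Suc eq by blast
    moreover have "h \<otimes> (h [^] n \<otimes> a) = h [^] Suc n \<otimes> a"
      using assms(4) aG by (metis m_assoc nat_pow_Suc2 nat_pow_closed)
    ultimately show ?case by simp
  qed
  have "inj (\<lambda>n::nat. h [^] n \<otimes> a)"
    by (rule injI) (use pow_inj assms(4,5) aG in auto)
  then have "infinite (range (\<lambda>n::nat. h [^] n \<otimes> a))"
    by (simp add: range_inj_infinite)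
  moreover have "range (\<lambda>n::nat. h [^] n \<otimes> a) \<subseteq> A" using mem by blast
  ultimately show False using assms(1) finite_subset by blast
qed

lemma rt_ne: assumes "finite A" "A \<noteq> {}" "A \<subseteq> carrier G" "h \<in> carrier G" "h \<noteq> \<one>"
  shows "(\<lambda>z. z \<otimes> h) ` A \<noteq> A"
proof
  assume eq: "(\<lambda>z. z \<otimes> h) ` A = A"
  obtain a where a: "a \<in> A" using assms(2) by blast
  have aG: "a \<in> carrier G" using a assms(3) by blast
  have mem: "a \<otimes> h [^] n \<in> A" for n::nat
  proof (induction n)
    case 0 then show ?case using a aG by simp
  next
    case (Suc n)
    have "(a \<otimes> h [^] n) \<otimes> h \<in> A" using Suc eq by blast
    moreover have "(a \<otimes> h [^] n) \<otimes> h = a \<otimes> h [^] Suc n"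
      using assms(4) aG by (simp add: m_assoc nat_pow_Suc)
    ultimately show ?case by simp
  qed
  have "inj (\<lambda>n::nat. a \<otimes> h [^] n)"
    by (rule injI) (use pow_inj assms(4,5) aG in auto)
  then have "infinite (range (\<lambda>n::nat. a \<otimes> h [^] n))"
    by (simp add: range_inj_infinite)
  moreover have "range (\<lambda>n::nat. a \<otimes> h [^] n) \<subseteq> A" using mem by blast
  ultimately show False using assms(1) finite_subset by blast
qed

lemma lt_diff_pos: assumes "finite A" "A \<noteq> {}" "A \<subseteq> carrier G" "h \<in> carrier G" "h \<noteq> \<one>"
  shows "(\<lambda>z. h \<otimes> z) ` A - A \<noteq> {}"
proof
  assume "(\<lambda>z. h \<otimes> z) ` A - A = {}"
  then have "(\<lambda>z. h \<otimes> z) ` A \<subseteq> A" by blast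
  moreover have "card ((\<lambda>z. h \<otimes> z) ` A) = card A" using card_lt assms by blast
  ultimately have "(\<lambda>z. h \<otimes> z) ` A = A" using assms(1) by (simp add: card_subset_eq)
  then show False using lt_ne assms by blast
qed

lemma rt_diff_pos: assumes "finite A" "A \<noteq> {}" "A \<subseteq> carrier G" "h \<in> carrier G" "h \<noteq> \<one>"
  shows "(\<lambda>z. z \<otimes> h) ` A - A \<noteq> {}"
proof
  assume "(\<lambda>z. z \<otimes> h) ` A - A = {}"
  then have "(\<lambda>z. z \<otimes> h) ` A \<subseteq> A" by blast
  moreover have "card ((\<lambda>z. z \<otimes> h) ` A) = card A" using card_rt assms by blast
  ultimately have "(\<lambda>z. z \<otimes> h) ` A = A" using assms(1) by (simp add: card_subset_eq)
  then show False using rt_ne assms by blast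
qed

lemma card_le_smult: assumes "finite A" "A \<subseteq> carrier G" "finite B" "B \<noteq> {}" "B \<subseteq> carrier G"
  shows "card A \<le> card (A <#> B)"
proof -
  obtain b where b: "b \<in> B" using assms(4) by blast
  have "(\<lambda>z. z \<otimes> b) ` A \<subseteq> A <#> B" using b unfolding set_mult_def by blast
  then have "card ((\<lambda>z. z \<otimes> b) ` A) \<le> card (A <#> B)"
    using smult_finite assms by (meson card_mono)
  then show ?thesis using card_rt assms b by (metis subsetD)
qed

lemma single_smult: "x \<in> carrier G \<Longrightarrow> B \<subseteq> carrier G \<Longrightarrow> {x} <#> B = (\<lambda>z. x \<otimes> z) ` B"
  by (auto simp: smult_iff)


lemma ineq:
  assumes A: "finite A" "A \<noteq> {}" "A \<subseteq> carrier G"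
    and B: "finite B" "B \<noteq> {}" "B \<subseteq> carrier G"
  shows "card A + card B \<le> card (A <#> B) + 1"
proof -
  define P where "P W \<longleftrightarrow> finite W \<and> W \<noteq> {} \<and> W \<subseteq> carrier G" for W
  define f where "f W = card (W <#> B) - card W" for W
  have le: "P W \<Longrightarrow> card W \<le> card (W <#> B)" for W
    unfolding P_def using card_le_smult B by blast
  have PA: "P A" using A P_def by blast
  define \<kappa> where "\<kappa> = (LEAST k. \<exists>W. P W \<and> f W = k)"
  have \<kappa>_ex: "\<exists>W. P W \<and> f W = \<kappa>" unfolding \<kappa>_def by (rule LeastI_ex) (use PA in blast)
  have \<kappa>_le: "P W \<Longrightarrow> \<kappa> \<le> f W" for W unfolding \<kappa>_def by (rule Least_le) blast
  define m where "m = (LEAST n. \<exists>W. P W \<and> f W = \<kappa> \<and> card W = n)"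
  have m_ex: "\<exists>W. P W \<and> f W = \<kappa> \<and> card W = m" unfolding m_def by (rule LeastI_ex) (use \<kappa>_ex in blast)
  have m_le: "P Y \<Longrightarrow> f Y = \<kappa> \<Longrightarrow> m \<le> card Y" for Y unfolding m_def by (rule Least_le) blast
  obtain W where W: "P W" "f W = \<kappa>" "card W = m" using m_ex by blast
  have Xf: "finite W" "W \<noteq> {}" "W \<subseteq> carrier G" using W(1) P_def by auto
  have "card W = 1"
  proof (rule ccontr)
    assume "card W \<noteq> 1"
    moreover have "card W \<noteq> 0" using Xf by simp
    ultimately have "card W \<ge> 2" by linarith
    obtain x where x1: "x \<in> W" using Xf by blast
    have "W - {x} \<noteq> {}"
    proof
      assume "W - {x} = {}"
      then have "W = {x}" using x1 by blast
      then show False using \<open>card W \<ge> 2\<close> by simp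
    qed
    then obtain x' where x2: "x' \<in> W - {x}" by blast
    have xx: "x \<in> W" "x' \<in> W" "x \<noteq> x'" using x1 x2 by auto
    define h where "h = x' \<otimes> inv x"
    have xG: "x \<in> carrier G" "x' \<in> carrier G" using xx Xf by auto
    have hG: "h \<in> carrier G" using xG h_def by simp
    have h1: "h \<noteq> \<one>"
    proof
      assume "h = \<one>"
      then have "x' = \<one> \<otimes> x" using inv_solve_right'[of "\<one>" x' x] xG h_def by simp
      then show False using xx xG by simp
    qed
    define Z where "Z = (\<lambda>z. h \<otimes> z) ` W"
    have ZG: "Z \<subseteq> carrier G" using Z_def Xf hG by auto
    have Zf: "finite Z" "Z \<noteq> {}" using Z_def Xf by auto
    have cZ: "card Z = card W" using card_lt Z_def Xf hG by simp
    have ZB: "Z <#> B = (\<lambda>z. h \<otimes> z) ` (W <#> B)" using lt_smult Z_def Xf B hG by simp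
    have cZB: "card (Z <#> B) = card (W <#> B)"
      using ZB card_lt smult_carrier Xf B hG by simp
    have "h \<otimes> x = x'" using h_def xG by (simp add: m_assoc)
    then have x'Z: "x' \<in> Z" unfolding Z_def by (rule image_eqI[OF sym]) (rule xx(1))
    have PI: "P (W \<inter> Z)" unfolding P_def
    proof (intro conjI)
      show "finite (W \<inter> Z)" using Xf(1) by simp
      show "W \<inter> Z \<noteq> {}" using x'Z xx(2) by blast
      show "W \<inter> Z \<subseteq> carrier G" using Xf(3) by blast
    qed
    have PU: "P (W \<union> Z)" unfolding P_def using Xf Zf ZG by simp
    have s1: "(W \<inter> Z) <#> B \<subseteq> (W <#> B) \<inter> (Z <#> B)" by (intro Int_greatest smult_mono) auto
    have s2: "(W \<union> Z) <#> B = (W <#> B) \<union> (Z <#> B)" unfolding smult_image by (simp add: Sigma_Un_distrib1 image_Un)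
    have fXB: "finite (W <#> B)" "finite (Z <#> B)" using smult_finite Xf Zf B by auto
    have c1: "card ((W <#> B) \<inter> (Z <#> B)) + card ((W <#> B) \<union> (Z <#> B)) = card (W <#> B) + card (Z <#> B)"
      using card_Un_Int[OF fXB(1) fXB(2)] by linarith
    have c2: "card (W \<inter> Z) + card (W \<union> Z) = card W + card Z"
      using card_Un_Int[OF Xf(1) Zf(1)] by linarith
    have e1: "card (W <#> B) = card W + \<kappa>" using W(2) le[OF W(1)] f_def by simp
    have e2: "card (W \<union> Z) + \<kappa> \<le> card ((W \<union> Z) <#> B)" using \<kappa>_le[OF PU] le[OF PU] f_def by simp
    have e3: "card ((W \<inter> Z) <#> B) \<le> card ((W <#> B) \<inter> (Z <#> B))"
      using s1 fXB by (simp add: card_mono)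
    have "card ((W \<inter> Z) <#> B) \<le> card (W \<inter> Z) + \<kappa>"
    proof -
      have e2': "card (W \<union> Z) + \<kappa> \<le> card ((W <#> B) \<union> (Z <#> B))" using e2 s2 by simp
      show ?thesis using c1 c2 e1 e2' e3 cZ cZB by linarith
    qed
    then have "f (W \<inter> Z) \<le> \<kappa>" using f_def by simp
    then have "f (W \<inter> Z) = \<kappa>" using \<kappa>_le[OF PI] by simp
    then have "m \<le> card (W \<inter> Z)" using m_le PI by blast
    then have "W \<inter> Z = W" using card_seteq[OF Xf(1) Int_lower1[of W Z]] W(3) by simp
    then have "W \<subseteq> Z" by blast
    then have "W = Z" using cZ Zf by (simp add: card_subset_eq)
    then show False using lt_ne[OF Xf hG h1] Z_def by simp
  qed
  then obtain x where Xx: "W = {x}" by (rule card_1_singletonE)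
  have xG: "x \<in> carrier G" using Xx Xf by auto
  have "card ({x} <#> B) = card B" using single_smult card_lt xG B by simp
  then have "\<kappa> = card B - 1" using W(2) Xx f_def by simp
  then have "card B - 1 \<le> card (A <#> B) - card A" using \<kappa>_le[OF PA] f_def by simp
  moreover have "card A \<le> card (A <#> B)" using le PA by blast
  moreover have "card B \<ge> 1" using B by (simp add: Suc_leI card_gt_0_iff)
  ultimately show ?thesis by linarith
qed


lemma cancel_l: "x \<in> carrier G \<Longrightarrow> y \<in> carrier G \<Longrightarrow> x \<otimes> (inv x \<otimes> y) = y"
  by (simp add: m_assoc[symmetric])

lemma cancel_r: "x \<in> carrier G \<Longrightarrow> y \<in> carrier G \<Longrightarrow> (y \<otimes> inv x) \<otimes> x = y"
  by (simp add: m_assoc)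

lemma tight_sub_tight:
  assumes A: "finite A" "A \<noteq> {}" "A \<subseteq> carrier G" and B: "finite B" "B \<noteq> {}" "B \<subseteq> carrier G"
    and Z: "finite Z" "Z \<subseteq> carrier G" "card Z = card A" "card (Z <#> B) = card (A <#> B)"
    and tight: "card (A <#> B) + 1 = card A + card B"
    and I: "A \<inter> Z \<noteq> {}"
  shows "card ((A \<inter> Z) <#> B) + 1 = card (A \<inter> Z) + card B"
proof -
  have s1: "(A \<inter> Z) <#> B \<subseteq> (A <#> B) \<inter> (Z <#> B)" by (intro Int_greatest smult_mono) auto
  have s2: "(A \<union> Z) <#> B = (A <#> B) \<union> (Z <#> B)" unfolding smult_image by (simp add: Sigma_Un_distrib1 image_Un)
  have fXB: "finite (A <#> B)" "finite (Z <#> B)" using smult_finite A Z B by auto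
  have c1: "card ((A <#> B) \<inter> (Z <#> B)) + card ((A <#> B) \<union> (Z <#> B)) = card (A <#> B) + card (Z <#> B)"
    using card_Un_Int[OF fXB(1) fXB(2)] by linarith
  have c2: "card (A \<inter> Z) + card (A \<union> Z) = card A + card Z"
    using card_Un_Int[OF A(1) Z(1)] by linarith
  have e2: "card (A \<union> Z) + card B \<le> card ((A \<union> Z) <#> B) + 1"
    by (rule ineq) (use A Z B in auto)
  have e2': "card (A \<union> Z) + card B \<le> card ((A <#> B) \<union> (Z <#> B)) + 1" using e2 s2 by simp
  have e3: "card ((A \<inter> Z) <#> B) \<le> card ((A <#> B) \<inter> (Z <#> B))"
    using s1 fXB by (simp add: card_mono)
  have e4: "card (A \<inter> Z) + card B \<le> card ((A \<inter> Z) <#> B) + 1"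
    by (rule ineq) (use A Z B I in auto)
  show ?thesis using c1 c2 e2' e3 e4 Z tight by linarith
qed

lemma P1_left:
  assumes A: "finite A" "A \<noteq> {}" "A \<subseteq> carrier G" and B: "finite B" "B \<noteq> {}" "B \<subseteq> carrier G"
    and tight: "card (A <#> B) + 1 = card A + card B"
    and minA: "\<And>S. S \<subseteq> A \<Longrightarrow> S \<noteq> A \<Longrightarrow> 2 \<le> card S \<Longrightarrow> card (S <#> B) + 1 \<noteq> card S + card B"
    and h: "h \<in> carrier G" "h \<noteq> \<one>"
    and uv: "u \<in> A" "v \<in> A" "u \<in> (\<lambda>z. h \<otimes> z) ` A" "v \<in> (\<lambda>z. h \<otimes> z) ` A"
  shows "u = v"
proof (rule ccontr)
  assume uv': "u \<noteq> v"
  define Z where "Z = (\<lambda>z. h \<otimes> z) ` A"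
  have ZG: "Z \<subseteq> carrier G" using Z_def A h by auto
  have Zf: "finite Z" using Z_def A by auto
  have cZ: "card Z = card A" using card_lt Z_def A h by simp
  have ZB: "Z <#> B = (\<lambda>z. h \<otimes> z) ` (A <#> B)" using lt_smult Z_def A B h by simp
  have cZB: "card (Z <#> B) = card (A <#> B)"
    using ZB card_lt smult_carrier A B h by simp
  have sub: "{u, v} \<subseteq> A \<inter> Z" using uv Z_def by blast
  have I2: "2 \<le> card (A \<inter> Z)"
  proof -
    have "card {u, v} \<le> card (A \<inter> Z)" using sub A(1) by (simp add: card_mono)
    then show ?thesis using uv' by simp
  qed
  have "card ((A \<inter> Z) <#> B) + 1 = card (A \<inter> Z) + card B"
    by (rule tight_sub_tight[OF A B Zf ZG cZ cZB tight]) (use sub in blast)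
  then have "A \<inter> Z = A" using minA[of "A \<inter> Z"] I2 by blast
  then have "A \<subseteq> Z" by blast
  then have "A = Z" using cZ Zf by (simp add: card_subset_eq)
  then show False using lt_ne[OF A h] Z_def by simp
qed

lemma tight_sub_tight_r:
  assumes A: "finite A" "A \<noteq> {}" "A \<subseteq> carrier G" and B: "finite B" "B \<noteq> {}" "B \<subseteq> carrier G"
    and Z: "finite Z" "Z \<subseteq> carrier G" "card Z = card B" "card (A <#> Z) = card (A <#> B)"
    and tight: "card (A <#> B) + 1 = card A + card B"
    and I: "B \<inter> Z \<noteq> {}"
  shows "card (A <#> (B \<inter> Z)) + 1 = card A + card (B \<inter> Z)"
proof -
  have s1: "A <#> (B \<inter> Z) \<subseteq> (A <#> B) \<inter> (A <#> Z)" by (intro Int_greatest smult_mono) auto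
  have s2: "A <#> (B \<union> Z) = (A <#> B) \<union> (A <#> Z)" unfolding smult_image by (simp add: Sigma_Un_distrib2 image_Un)
  have fXB: "finite (A <#> B)" "finite (A <#> Z)" using smult_finite A Z B by auto
  have c1: "card ((A <#> B) \<inter> (A <#> Z)) + card ((A <#> B) \<union> (A <#> Z)) = card (A <#> B) + card (A <#> Z)"
    using card_Un_Int[OF fXB(1) fXB(2)] by linarith
  have c2: "card (B \<inter> Z) + card (B \<union> Z) = card B + card Z"
    using card_Un_Int[OF B(1) Z(1)] by linarith
  have e2: "card A + card (B \<union> Z) \<le> card (A <#> (B \<union> Z)) + 1"
    by (rule ineq) (use A Z B in auto)
  have e2': "card A + card (B \<union> Z) \<le> card ((A <#> B) \<union> (A <#> Z)) + 1" using e2 s2 by simp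
  have e3: "card (A <#> (B \<inter> Z)) \<le> card ((A <#> B) \<inter> (A <#> Z))"
    using s1 fXB by (simp add: card_mono)
  have e4: "card A + card (B \<inter> Z) \<le> card (A <#> (B \<inter> Z)) + 1"
    by (rule ineq) (use A Z B I in auto)
  show ?thesis using c1 c2 e2' e3 e4 Z tight by linarith
qed

lemma P1_right:
  assumes A: "finite A" "A \<noteq> {}" "A \<subseteq> carrier G" and B: "finite B" "B \<noteq> {}" "B \<subseteq> carrier G"
    and tight: "card (A <#> B) + 1 = card A + card B"
    and minB: "\<And>T. T \<subseteq> B \<Longrightarrow> T \<noteq> B \<Longrightarrow> 2 \<le> card T \<Longrightarrow> card (A <#> T) + 1 \<noteq> card A + card T"
    and h: "h \<in> carrier G" "h \<noteq> \<one>"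
    and uv: "u \<in> B" "v \<in> B" "u \<in> (\<lambda>z. z \<otimes> h) ` B" "v \<in> (\<lambda>z. z \<otimes> h) ` B"
  shows "u = v"
proof (rule ccontr)
  assume uv': "u \<noteq> v"
  define Z where "Z = (\<lambda>z. z \<otimes> h) ` B"
  have ZG: "Z \<subseteq> carrier G" using Z_def B h by auto
  have Zf: "finite Z" using Z_def B by auto
  have cZ: "card Z = card B" using card_rt Z_def B h by simp
  have ZB: "A <#> Z = (\<lambda>z. z \<otimes> h) ` (A <#> B)" using rt_smult Z_def A B h by simp
  have cZB: "card (A <#> Z) = card (A <#> B)"
    using ZB card_rt smult_carrier A B h by simp
  have sub: "{u, v} \<subseteq> B \<inter> Z" using uv Z_def by blast
  have I2: "2 \<le> card (B \<inter> Z)"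
  proof -
    have "card {u, v} \<le> card (B \<inter> Z)" using sub B(1) by (simp add: card_mono)
    then show ?thesis using uv' by simp
  qed
  have "card (A <#> (B \<inter> Z)) + 1 = card A + card (B \<inter> Z)"
    by (rule tight_sub_tight_r[OF A B Zf ZG cZ cZB tight]) (use sub in blast)
  then have "B \<inter> Z = B" using minB[of "B \<inter> Z"] I2 by blast
  then have "B \<subseteq> Z" by blast
  then have "B = Z" using cZ Zf by (simp add: card_subset_eq)
  then show False using rt_ne[OF B h] Z_def by simp
qed


lemma card_offdiag:
  assumes "finite A"
  shows "card {(a, a'). a \<in> A \<and> a' \<in> A \<and> a \<noteq> a'} = card A * card A - card A"
proof -
  have e: "{(a, a'). a \<in> A \<and> a' \<in> A \<and> a \<noteq> a'} = A \<times> A - (\<lambda>a. (a, a)) ` A" by auto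
  have "card ((\<lambda>a. (a, a)) ` A) = card A" by (rule card_image) (auto simp: inj_on_def)
  moreover have "card (A \<times> A - (\<lambda>a. (a, a)) ` A) = card (A \<times> A) - card ((\<lambda>a. (a, a)) ` A)"
    by (rule card_Diff_subset) (use assms in auto)
  ultimately show ?thesis using e by (simp add: card_cartesian_product)
qed

lemma crit:
  assumes A: "finite A" "A \<noteq> {}" "A \<subseteq> carrier G" and B: "finite B" "B \<noteq> {}" "B \<subseteq> carrier G"
    and tight: "card (A <#> B) + 1 = card A + card B"
    and A3: "3 \<le> card A" and B3: "3 \<le> card B"
    and minA: "\<And>S. S \<subseteq> A \<Longrightarrow> S \<noteq> A \<Longrightarrow> 2 \<le> card S \<Longrightarrow> card (S <#> B) + 1 \<noteq> card S + card B"
    and minB: "\<And>T. T \<subseteq> B \<Longrightarrow> T \<noteq> B \<Longrightarrow> 2 \<le> card T \<Longrightarrow> card (A <#> T) + 1 \<noteq> card A + card T"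
  shows False
proof -
  define C where "C = {(a, b, a', b'). a \<in> A \<and> b \<in> B \<and> a' \<in> A \<and> b' \<in> B \<and> a \<noteq> a' \<and> a \<otimes> b = a' \<otimes> b'}"
  have Csub: "C \<subseteq> A \<times> B \<times> A \<times> B" by (auto simp: C_def)
  have finC: "finite C" using finite_subset[OF Csub] A(1) B(1) by auto
  have partner: "\<exists>a' b'. (a, b, a', b') \<in> C" if ab: "a \<in> A" "b \<in> B" for a b
  proof -
    define S where "S = A - {a}"
    have cS: "card S = card A - 1" using S_def ab A(1) by simp
    have S2: "2 \<le> card S" using cS A3 by simp
    have SA: "S \<subseteq> A" "S \<noteq> A" using S_def ab by auto
    have Sf: "finite S" "S \<noteq> {}" "S \<subseteq> carrier G" using S2 SA A by auto
    have "card (S <#> B) + 1 \<noteq> card S + card B" using minA SA S2 by blast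
    moreover have "card S + card B \<le> card (S <#> B) + 1" by (rule ineq[OF Sf B])
    ultimately have "card (A <#> B) \<le> card (S <#> B)" using cS tight A3 by linarith
    moreover have "S <#> B \<subseteq> A <#> B" using SA smult_mono by blast
    moreover have "finite (A <#> B)" using smult_finite A B by simp
    ultimately have "S <#> B = A <#> B" using card_seteq by blast
    moreover have "a \<otimes> b \<in> A <#> B" using ab by (rule smultI) simp
    ultimately have "a \<otimes> b \<in> S <#> B" by simp
    then obtain a' b' where "a' \<in> S" "b' \<in> B" "a \<otimes> b = a' \<otimes> b'" by (auto simp: smult_iff)
    then show ?thesis using ab S_def unfolding C_def by blast
  qed
  have le1: "card (A \<times> B) \<le> card C"
  proof -
    have "A \<times> B \<subseteq> (\<lambda>(a, b, a', b'). (a, b)) ` C"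
    proof
      fix p assume "p \<in> A \<times> B"
      then obtain a b where p: "p = (a, b)" "a \<in> A" "b \<in> B" by blast
      then obtain a' b' where "(a, b, a', b') \<in> C" using partner by blast
      then show "p \<in> (\<lambda>(a, b, a', b'). (a, b)) ` C" using p by force
    qed
    then have "card (A \<times> B) \<le> card ((\<lambda>(a, b, a', b'). (a, b)) ` C)"
      using finC by (simp add: card_mono)
    also have "\<dots> \<le> card C" using finC by (rule card_image_le)
    finally show ?thesis .
  qed
  have injA: "inj_on (\<lambda>(a, b, a', b'). (a, a')) C"
  proof (rule inj_onI)
    fix p q assume pC: "p \<in> C" and qC: "q \<in> C"
      and fpq: "(\<lambda>(a, b, a', b'). (a, a')) p = (\<lambda>(a, b, a', b'). (a, a')) q"
    obtain a b1 a' b1' where p: "p = (a, b1, a', b1')" by (cases p) auto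
    obtain a2 b2 a2' b2' where q: "q = (a2, b2, a2', b2')" by (cases q) auto
    have eq: "a = a2" "a' = a2'" using fpq p q by auto
    have c1: "(a, b1, a', b1') \<in> C" using pC p by simp
    have c2: "(a2, b2, a2', b2') \<in> C" using qC q by simp
    have m1: "a \<in> A" "b1 \<in> B" "a' \<in> A" "b1' \<in> B" "a \<noteq> a'" "a \<otimes> b1 = a' \<otimes> b1'" using c1 C_def by auto
    have m2: "b2 \<in> B" "b2' \<in> B" "a \<otimes> b2 = a' \<otimes> b2'" using c2 C_def eq by auto
    have G: "a \<in> carrier G" "b1 \<in> carrier G" "a' \<in> carrier G" "b1' \<in> carrier G" "b2 \<in> carrier G" "b2' \<in> carrier G"
      using m1 m2 A B by auto
    have b12: "b1 = b2"
    proof (rule ccontr)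
      assume ne: "b1 \<noteq> b2"
      define h where "h = inv b1 \<otimes> b2"
      have hG: "h \<in> carrier G" using h_def G by simp
      have h1: "h \<noteq> \<one>"
      proof
        assume "h = \<one>"
        then have "b1 \<otimes> h = b1" using G by simp
        moreover have "b1 \<otimes> h = b2" using h_def G cancel_l by simp
        ultimately show False using ne by simp
      qed
      have u: "b2 = b1 \<otimes> h" using h_def G cancel_l by simp
      have "a' \<otimes> (b1' \<otimes> h) = a' \<otimes> b2'"
      proof -
        have "a' \<otimes> (b1' \<otimes> h) = (a' \<otimes> b1') \<otimes> h" using G hG by (simp add: m_assoc)
        also have "\<dots> = (a \<otimes> b1) \<otimes> h" using m1 by simp
        also have "\<dots> = a \<otimes> (b1 \<otimes> h)" using G hG by (simp add: m_assoc)
        also have "\<dots> = a \<otimes> b2" using u by simp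
        finally show ?thesis using m2 by simp
      qed
      then have v: "b2' = b1' \<otimes> h" using G hG by simp
      have uv: "b2 \<noteq> b2'"
      proof
        assume "b2 = b2'"
        then have "a \<otimes> b2 = a' \<otimes> b2" using m2 by simp
        then show False using m1 G by simp
      qed
      have "b2 = b2'"
        by (rule P1_right[OF A B tight minB hG h1 m2(1) m2(2)]) (use u v m1 in blast)+
      then show False using uv by simp
    qed
    have "a' \<otimes> b1' = a' \<otimes> b2'" using m1 m2 b12 by simp
    then have "b1' = b2'" using G by simp
    then show "p = q" using b12 p q eq by simp
  qed
  have injB: "inj_on (\<lambda>(a, b, a', b'). (b, b')) C"
  proof (rule inj_onI)
    fix p q assume pC: "p \<in> C" and qC: "q \<in> C"
      and fpq: "(\<lambda>(a, b, a', b'). (b, b')) p = (\<lambda>(a, b, a', b'). (b, b')) q"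
    obtain a1 b a1' b' where p: "p = (a1, b, a1', b')" by (cases p) auto
    obtain a2 b2 a2' b2' where q: "q = (a2, b2, a2', b2')" by (cases q) auto
    have eq: "b = b2" "b' = b2'" using fpq p q by auto
    have c1: "(a1, b, a1', b') \<in> C" using pC p by simp
    have c2: "(a2, b2, a2', b2') \<in> C" using qC q by simp
    have m1: "a1 \<in> A" "b \<in> B" "a1' \<in> A" "b' \<in> B" "a1 \<otimes> b = a1' \<otimes> b'" using c1 C_def by auto
    have m2: "a2 \<in> A" "a2' \<in> A" "a2 \<noteq> a2'" "a2 \<otimes> b = a2' \<otimes> b'" using c2 C_def eq by auto
    have G: "a1 \<in> carrier G" "b \<in> carrier G" "a1' \<in> carrier G" "b' \<in> carrier G" "a2 \<in> carrier G" "a2' \<in> carrier G"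
      using m1 m2 A B by auto
    have a12: "a1 = a2"
    proof (rule ccontr)
      assume ne: "a1 \<noteq> a2"
      define h where "h = a2 \<otimes> inv a1"
      have hG: "h \<in> carrier G" using h_def G by simp
      have h1: "h \<noteq> \<one>"
      proof
        assume "h = \<one>"
        then have "h \<otimes> a1 = a1" using G by simp
        moreover have "h \<otimes> a1 = a2" using h_def G cancel_r by simp
        ultimately show False using ne by simp
      qed
      have u: "a2 = h \<otimes> a1" using h_def G cancel_r by simp
      have "(h \<otimes> a1') \<otimes> b' = a2' \<otimes> b'"
      proof -
        have "(h \<otimes> a1') \<otimes> b' = h \<otimes> (a1' \<otimes> b')" using G hG by (simp add: m_assoc)
        also have "\<dots> = h \<otimes> (a1 \<otimes> b)" using m1 by simp
        also have "\<dots> = (h \<otimes> a1) \<otimes> b" using G hG by (simp add: m_assoc)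
        also have "\<dots> = a2 \<otimes> b" using u by simp
        finally show ?thesis using m2 by simp
      qed
      then have v: "a2' = h \<otimes> a1'" using G hG by simp
      have "a2 = a2'"
        by (rule P1_left[OF A B tight minA hG h1 m2(1) m2(2)]) (use u v m1 in blast)+
      then show False using m2 by simp
    qed
    have "a1' \<otimes> b' = a2' \<otimes> b'" using m1 m2 a12 by simp
    then have "a1' = a2'" using G by simp
    then show "p = q" using a12 p q eq by simp
  qed
  have le2: "card C \<le> card A * card A - card A"
  proof -
    have "(\<lambda>(a, b, a', b'). (a, a')) ` C \<subseteq> {(a, a'). a \<in> A \<and> a' \<in> A \<and> a \<noteq> a'}"
      by (auto simp: C_def)
    then have "card ((\<lambda>(a, b, a', b'). (a, a')) ` C) \<le> card {(a, a'). a \<in> A \<and> a' \<in> A \<and> a \<noteq> a'}"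
      by (rule card_mono[rotated]) (use A(1) in \<open>simp add: finite_subset[of _ "A \<times> A"] subset_iff\<close>)
    then show ?thesis using card_image[OF injA] card_offdiag[OF A(1)] by simp
  qed
  have le3: "card C \<le> card B * card B - card B"
  proof -
    have "(\<lambda>(a, b, a', b'). (b, b')) ` C \<subseteq> {(a, a'). a \<in> B \<and> a' \<in> B \<and> a \<noteq> a'}"
    proof
      fix p assume "p \<in> (\<lambda>(a, b, a', b'). (b, b')) ` C"
      then obtain a b a' b' where p: "p = (b, b')" "(a, b, a', b') \<in> C" by auto
      then have m: "a \<in> A" "b \<in> B" "a' \<in> A" "b' \<in> B" "a \<noteq> a'" "a \<otimes> b = a' \<otimes> b'" using C_def by auto
      have "b \<noteq> b'"
      proof
        assume "b = b'"
        then have "a \<otimes> b = a' \<otimes> b" using m by simp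
        then show False using m A B by (meson right_cancel subsetD)
      qed
      then show "p \<in> {(a, a'). a \<in> B \<and> a' \<in> B \<and> a \<noteq> a'}" using p m by simp
    qed
    then have "card ((\<lambda>(a, b, a', b'). (b, b')) ` C) \<le> card {(a, a'). a \<in> B \<and> a' \<in> B \<and> a \<noteq> a'}"
      by (rule card_mono[rotated]) (use B(1) in \<open>simp add: finite_subset[of _ "B \<times> B"] subset_iff\<close>)
    then show ?thesis using card_image[OF injB] card_offdiag[OF B(1)] by simp
  qed
  have p1: "card A * card B \<le> card A * (card A - 1)"
    using le1 le2 by (simp add: card_cartesian_product diff_mult_distrib2)
  have p2: "card B * card A \<le> card B * (card B - 1)"
    using le1 le3 by (simp add: card_cartesian_product diff_mult_distrib2 mult.commute)
  have "card B \<le> card A - 1" using p1 A3 by simp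
  moreover have "card A \<le> card B - 1" using p2 B3 by simp
  ultimately show False using A3 by linarith
qed


lemma III:
  assumes A: "finite A" "A \<noteq> {}" "A \<subseteq> carrier G" and B: "finite B" "B \<noteq> {}" "B \<subseteq> carrier G"
    and tight: "card (A <#> B) + 1 = card A + card B"
    and B2: "2 \<le> card B" and x: "x \<in> carrier G" "x \<noteq> \<one>"
    and xB: "card ((\<lambda>z. x \<otimes> z) ` B - B) = 1"
  shows "card ((\<lambda>z. z \<otimes> x) ` A - A) = 1"
proof -
  define B' where "B' = {b \<in> B. x \<otimes> b \<in> B}"
  have im: "(\<lambda>z. x \<otimes> z) ` B' = (\<lambda>z. x \<otimes> z) ` B \<inter> B" by (auto simp: B'_def)
  have B'sub: "B' \<subseteq> B" by (auto simp: B'_def)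
  have "card ((\<lambda>z. x \<otimes> z) ` B - B) = card ((\<lambda>z. x \<otimes> z) ` B) - card ((\<lambda>z. x \<otimes> z) ` B \<inter> B)"
    by (rule card_Diff_subset_Int) (use B in simp)
  then have "card ((\<lambda>z. x \<otimes> z) ` B \<inter> B) = card B - 1"
    using xB card_lt[OF B(3) x(1)] by simp
  then have cB': "card B' = card B - 1"
    using im card_lt[of B' x] B'sub B x by (metis subset_trans)
  have B'f: "finite B'" "B' \<noteq> {}" "B' \<subseteq> carrier G" using cB' B2 B'sub B
    by (auto intro: finite_subset)
  define A1 where "A1 = A \<union> (\<lambda>z. z \<otimes> x) ` A"
  have A1f: "finite A1" "A1 \<noteq> {}" "A1 \<subseteq> carrier G" using A x by (auto simp: A1_def)
  have sub: "A1 <#> B' \<subseteq> A <#> B"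
  proof
    fix y assume "y \<in> A1 <#> B'"
    then obtain a b where ab: "a \<in> A1" "b \<in> B'" "y = a \<otimes> b" by (auto simp: smult_iff)
    have bB: "b \<in> B" "x \<otimes> b \<in> B" using ab B'_def by auto
    show "y \<in> A <#> B"
    proof (cases "a \<in> A")
      case True then show ?thesis using ab bB by (metis smultI)
    next
      case False
      then obtain a0 where a0: "a0 \<in> A" "a = a0 \<otimes> x" using ab A1_def by auto
      have "y = a0 \<otimes> (x \<otimes> b)" using ab a0 A B x bB by (metis m_assoc subsetD)
      then show ?thesis using a0 bB by (metis smultI)
    qed
  qed
  have "card A1 + card B' \<le> card (A1 <#> B') + 1" by (rule ineq[OF A1f B'f])
  also have "card (A1 <#> B') \<le> card (A <#> B)" using sub smult_finite A B by (simp add: card_mono)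
  finally have e: "card A1 + card B' \<le> card (A <#> B) + 1" by simp
  have "card A1 = card A + card ((\<lambda>z. z \<otimes> x) ` A - A)"
  proof -
    have "A1 = A \<union> ((\<lambda>z. z \<otimes> x) ` A - A)" by (auto simp: A1_def)
    moreover have "card (A \<union> ((\<lambda>z. z \<otimes> x) ` A - A)) = card A + card ((\<lambda>z. z \<otimes> x) ` A - A)"
      by (rule card_Un_disjoint) (use A in auto)
    ultimately show ?thesis by simp
  qed
  then have le: "card ((\<lambda>z. z \<otimes> x) ` A - A) \<le> 1" using e cB' tight B2 by linarith
  have "(\<lambda>z. z \<otimes> x) ` A - A \<noteq> {}" by (rule rt_diff_pos[OF A x])
  then have "card ((\<lambda>z. z \<otimes> x) ` A - A) \<noteq> 0" using A(1) by simp
  then show ?thesis using le by linarith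
qed

lemma III':
  assumes A: "finite A" "A \<noteq> {}" "A \<subseteq> carrier G" and B: "finite B" "B \<noteq> {}" "B \<subseteq> carrier G"
    and tight: "card (A <#> B) + 1 = card A + card B"
    and A2: "2 \<le> card A" and x: "x \<in> carrier G" "x \<noteq> \<one>"
    and xA: "card ((\<lambda>z. z \<otimes> x) ` A - A) = 1"
  shows "card ((\<lambda>z. x \<otimes> z) ` B - B) = 1"
proof -
  define A' where "A' = {a \<in> A. a \<otimes> x \<in> A}"
  have im: "(\<lambda>z. z \<otimes> x) ` A' = (\<lambda>z. z \<otimes> x) ` A \<inter> A" by (auto simp: A'_def)
  have A'sub: "A' \<subseteq> A" by (auto simp: A'_def)
  have "card ((\<lambda>z. z \<otimes> x) ` A - A) = card ((\<lambda>z. z \<otimes> x) ` A) - card ((\<lambda>z. z \<otimes> x) ` A \<inter> A)"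
    by (rule card_Diff_subset_Int) (use A in simp)
  then have "card ((\<lambda>z. z \<otimes> x) ` A \<inter> A) = card A - 1"
    using xA card_rt[OF A(3) x(1)] by simp
  then have cA': "card A' = card A - 1"
    using im card_rt[of A' x] A'sub A x by (metis subset_trans)
  have A'f: "finite A'" "A' \<noteq> {}" "A' \<subseteq> carrier G" using cA' A2 A'sub A
    by (auto intro: finite_subset)
  define B1 where "B1 = B \<union> (\<lambda>z. x \<otimes> z) ` B"
  have B1f: "finite B1" "B1 \<noteq> {}" "B1 \<subseteq> carrier G" using B x by (auto simp: B1_def)
  have sub: "A' <#> B1 \<subseteq> A <#> B"
  proof
    fix y assume "y \<in> A' <#> B1"
    then obtain a b where ab: "a \<in> A'" "b \<in> B1" "y = a \<otimes> b" by (auto simp: smult_iff)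
    have aA: "a \<in> A" "a \<otimes> x \<in> A" using ab A'_def by auto
    show "y \<in> A <#> B"
    proof (cases "b \<in> B")
      case True then show ?thesis using ab aA by (metis smultI)
    next
      case False
      then obtain b0 where b0: "b0 \<in> B" "b = x \<otimes> b0" using ab B1_def by auto
      have "y = (a \<otimes> x) \<otimes> b0" using ab b0 A B x aA by (metis m_assoc subsetD)
      then show ?thesis using b0 aA by (metis smultI)
    qed
  qed
  have "card A' + card B1 \<le> card (A' <#> B1) + 1" by (rule ineq[OF A'f B1f])
  also have "card (A' <#> B1) \<le> card (A <#> B)" using sub smult_finite A B by (simp add: card_mono)
  finally have e: "card A' + card B1 \<le> card (A <#> B) + 1" by simp
  have "card B1 = card B + card ((\<lambda>z. x \<otimes> z) ` B - B)"
  proof -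
    have "B1 = B \<union> ((\<lambda>z. x \<otimes> z) ` B - B)" by (auto simp: B1_def)
    moreover have "card (B \<union> ((\<lambda>z. x \<otimes> z) ` B - B)) = card B + card ((\<lambda>z. x \<otimes> z) ` B - B)"
      by (rule card_Un_disjoint) (use B in auto)
    ultimately show ?thesis by simp
  qed
  then have le: "card ((\<lambda>z. x \<otimes> z) ` B - B) \<le> 1" using e cA' tight A2 by linarith
  have "(\<lambda>z. x \<otimes> z) ` B - B \<noteq> {}" by (rule lt_diff_pos[OF B x])
  then have "card ((\<lambda>z. x \<otimes> z) ` B - B) \<noteq> 0" using B(1) by simp
  then show ?thesis using le by linarith
qed


lemma L:
  assumes "finite A" "A \<subseteq> carrier G" "finite B" "B \<subseteq> carrier G" "2 \<le> card A" "2 \<le> card B"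
    "card (A <#> B) + 1 = card A + card B"
  shows "\<exists>x\<in>carrier G. x \<noteq> \<one> \<and> card ((\<lambda>z. x \<otimes> z) ` B - B) = 1"
  using assms
proof (induction "card A + card B" arbitrary: A B rule: less_induct)
  case less
  have A: "finite A" "A \<noteq> {}" "A \<subseteq> carrier G" using less.prems by auto
  have B: "finite B" "B \<noteq> {}" "B \<subseteq> carrier G" using less.prems by auto
  have tight: "card (A <#> B) + 1 = card A + card B" using less.prems by simp
  show ?case
  proof (cases "card A = 2")
    case True
    then obtain a1 a2 where a: "A = {a1, a2}" "a1 \<noteq> a2" by (auto simp: card_2_iff)
    have aG: "a1 \<in> carrier G" "a2 \<in> carrier G" using a A by auto
    define x where "x = inv a1 \<otimes> a2"
    have xG: "x \<in> carrier G" using x_def aG by simp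
    have ax: "a1 \<otimes> x = a2" using x_def aG cancel_l by simp
    have x1: "x \<noteq> \<one>"
    proof
      assume "x = \<one>"
      then show False using ax aG a(2) by simp
    qed
    have AB: "A <#> B = (\<lambda>z. a1 \<otimes> z) ` B \<union> (\<lambda>z. a2 \<otimes> z) ` B"
      unfolding a(1) smult_image by auto
    have img: "(\<lambda>z. a1 \<otimes> z) ` ((\<lambda>z. x \<otimes> z) ` B) = (\<lambda>z. a2 \<otimes> z) ` B"
      unfolding image_image
    proof (rule image_cong)
      fix z assume "z \<in> B"
      then have "z \<in> carrier G" using B by auto
      then show "a1 \<otimes> (x \<otimes> z) = a2 \<otimes> z" using ax aG xG by (simp add: m_assoc[symmetric])
    qed simp
    have xBG: "(\<lambda>z. x \<otimes> z) ` B \<subseteq> carrier G" using B xG by auto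
    have d: "(\<lambda>z. a1 \<otimes> z) ` ((\<lambda>z. x \<otimes> z) ` B - B) = (\<lambda>z. a2 \<otimes> z) ` B - (\<lambda>z. a1 \<otimes> z) ` B"
    proof -
      have "inj_on (\<lambda>z. a1 \<otimes> z) (carrier G)" by (rule inj_onI) (use aG in simp)
      then have "(\<lambda>z. a1 \<otimes> z) ` ((\<lambda>z. x \<otimes> z) ` B - B) = (\<lambda>z. a1 \<otimes> z) ` ((\<lambda>z. x \<otimes> z) ` B) - (\<lambda>z. a1 \<otimes> z) ` B"
        by (rule inj_on_image_set_diff) (use xBG B in auto)
      then show ?thesis using img by simp
    qed
    have "card ((\<lambda>z. x \<otimes> z) ` B - B) = card ((\<lambda>z. a2 \<otimes> z) ` B - (\<lambda>z. a1 \<otimes> z) ` B)"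
    proof -
      have "(\<lambda>z. x \<otimes> z) ` B - B \<subseteq> carrier G" using xBG by blast
      from card_lt[OF this aG(1)] d show ?thesis by simp
    qed
    moreover have "card (A <#> B) = card ((\<lambda>z. a1 \<otimes> z) ` B) + card ((\<lambda>z. a2 \<otimes> z) ` B - (\<lambda>z. a1 \<otimes> z) ` B)"
    proof -
      have "A <#> B = (\<lambda>z. a1 \<otimes> z) ` B \<union> ((\<lambda>z. a2 \<otimes> z) ` B - (\<lambda>z. a1 \<otimes> z) ` B)" using AB by blast
      moreover have "card ((\<lambda>z. a1 \<otimes> z) ` B \<union> ((\<lambda>z. a2 \<otimes> z) ` B - (\<lambda>z. a1 \<otimes> z) ` B))
          = card ((\<lambda>z. a1 \<otimes> z) ` B) + card ((\<lambda>z. a2 \<otimes> z) ` B - (\<lambda>z. a1 \<otimes> z) ` B)"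
        by (rule card_Un_disjoint) (use B in auto)
      ultimately show ?thesis by simp
    qed
    moreover have "card ((\<lambda>z. a1 \<otimes> z) ` B) = card B" using card_lt B aG by simp
    ultimately have "card ((\<lambda>z. x \<otimes> z) ` B - B) = 1" using tight True by simp
    then show ?thesis using xG x1 by blast
  next
    case A2: False
    show ?thesis
    proof (cases "card B = 2")
      case True
      then obtain b1 b2 where b: "B = {b1, b2}" "b1 \<noteq> b2" by (auto simp: card_2_iff)
      have bG: "b1 \<in> carrier G" "b2 \<in> carrier G" using b B by auto
      define x where "x = b2 \<otimes> inv b1"
      have xG: "x \<in> carrier G" using x_def bG by simp
      have xb: "x \<otimes> b1 = b2" using x_def bG cancel_r by simp
      have x1: "x \<noteq> \<one>"
      proof
        assume "x = \<one>"
        then show False using xb bG b(2) by simp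
      qed
      have n1: "x \<otimes> b2 \<noteq> b2" using x1 xG bG by simp
      have n2: "x \<otimes> b2 \<noteq> b1"
      proof
        assume "x \<otimes> b2 = b1"
        then have "(x \<otimes> x) \<otimes> b1 = b1" using xb xG bG by (simp add: m_assoc)
        then have "x \<otimes> x = \<one>" using xG bG by simp
        then have "x [^] (2::nat) = \<one>" using xG by (simp add: numeral_2_eq_2 nat_pow_Suc)
        then show False using pow_one_imp[of x 2] xG x1 by simp
      qed
      have "(\<lambda>z. x \<otimes> z) ` B - B = {x \<otimes> b2}" using b xb n1 n2 by auto
      then show ?thesis using xG x1 by auto
    next
      case B2: False
      have A3: "3 \<le> card A" using A2 less.prems by simp
      have B3: "3 \<le> card B" using B2 less.prems by simp
      show ?thesis
      proof (cases "\<exists>S. S \<subseteq> A \<and> S \<noteq> A \<and> 2 \<le> card S \<and> card (S <#> B) + 1 = card S + card B")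
        case True
        then obtain S where S: "S \<subseteq> A" "S \<noteq> A" "2 \<le> card S" "card (S <#> B) + 1 = card S + card B"
          by blast
        have "card S < card A" using S A(1) by (meson psubsetI psubset_card_mono)
        moreover have "finite S" "S \<subseteq> carrier G" using S A finite_subset by auto
        ultimately show ?thesis using less.hyps[of S B] S less.prems by simp
      next
        case False
        then have minA: "\<And>S. S \<subseteq> A \<Longrightarrow> S \<noteq> A \<Longrightarrow> 2 \<le> card S \<Longrightarrow> card (S <#> B) + 1 \<noteq> card S + card B"
          by blast
        show ?thesis
        proof (cases "\<exists>T. T \<subseteq> B \<and> T \<noteq> B \<and> 2 \<le> card T \<and> card (A <#> T) + 1 = card A + card T")
          case True
          then obtain T where T: "T \<subseteq> B" "T \<noteq> B" "2 \<le> card T" "card (A <#> T) + 1 = card A + card T"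
            by blast
          have "card T < card B" using T B(1) by (meson psubsetI psubset_card_mono)
          moreover have Tf: "finite T" "T \<noteq> {}" "T \<subseteq> carrier G" using T B finite_subset by auto
          ultimately obtain x where x: "x \<in> carrier G" "x \<noteq> \<one>" "card ((\<lambda>z. x \<otimes> z) ` T - T) = 1"
            using less.hyps[of A T] T less.prems by auto
          have "card ((\<lambda>z. z \<otimes> x) ` A - A) = 1" by (rule III[OF A Tf T(4) T(3) x])
          then have "card ((\<lambda>z. x \<otimes> z) ` B - B) = 1" by (rule III'[OF A B tight less.prems(5) x(1,2)])
          then show ?thesis using x by blast
        next
          case False
          then have minB: "\<And>T. T \<subseteq> B \<Longrightarrow> T \<noteq> B \<Longrightarrow> 2 \<le> card T \<Longrightarrow> card (A <#> T) + 1 \<noteq> card A + card T"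
            by blast
          have False by (rule crit[OF A B tight A3 B3 minA minB])
          then show ?thesis by simp
        qed
      qed
    qed
  qed
qed

lemma T2:
  assumes "finite A" "A \<subseteq> carrier G" "finite B" "B \<subseteq> carrier G" "2 \<le> card A" "2 \<le> card B"
    "card (A <#> B) + 1 = card A + card B"
  shows "\<exists>x\<in>carrier G. x \<noteq> \<one> \<and> card ((\<lambda>z. z \<otimes> x) ` A - A) = 1"
proof -
  obtain x where x: "x \<in> carrier G" "x \<noteq> \<one>" "card ((\<lambda>z. x \<otimes> z) ` B - B) = 1"
    using L[OF assms] by blast
  have A: "finite A" "A \<noteq> {}" "A \<subseteq> carrier G" using assms by auto
  have B: "finite B" "B \<noteq> {}" "B \<subseteq> carrier G" using assms by auto
  have "card ((\<lambda>z. z \<otimes> x) ` A - A) = 1" by (rule III[OF A B assms(7) assms(6) x])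
  then show ?thesis using x by blast
qed


lemma setcomp_Suc: "{f k | k. k < Suc n} = {f k | k. k < n} \<union> {f n}"
  by (auto simp: less_Suc_eq)

lemma right_prog:
  assumes x: "x \<in> carrier G" "x \<noteq> \<one>"
  shows "finite A \<Longrightarrow> A \<noteq> {} \<Longrightarrow> A \<subseteq> carrier G \<Longrightarrow> card ((\<lambda>z. z \<otimes> x) ` A - A) = 1
    \<Longrightarrow> \<exists>a0\<in>carrier G. A = {a0 \<otimes> x [^] k | k. k < card A}"
proof (induction "card A" arbitrary: A)
  case 0 then show ?case by simp
next
  case (Suc n)
  obtain c where c: "(\<lambda>z. z \<otimes> x) ` A - A = {c}" using Suc.prems(4) card_1_singletonE by blast
  then obtain a1 where a1: "a1 \<in> A" "c = a1 \<otimes> x" "c \<notin> A" by blast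
  have a1G: "a1 \<in> carrier G" using a1 Suc.prems by auto
  show ?case
  proof (cases "n = 0")
    case True
    then have "card A = 1" using Suc.hyps(2) by simp
    then obtain y where "A = {y}" by (rule card_1_singletonE)
    then have "A = {a1}" using a1(1) by simp
    then have "A = {a1 \<otimes> x [^] k | k. k < card A}" using a1G by auto
    then show ?thesis using a1G by blast
  next
    case False
    define A' where "A' = A - {a1}"
    have cA': "card A' = n" using A'_def Suc.hyps(2) a1(1) Suc.prems(1) by simp
    have "A' \<noteq> {}"
    proof
      assume "A' = {}"
      then show False using cA' False by simp
    qed
    then have A'f: "finite A'" "A' \<noteq> {}" "A' \<subseteq> carrier G" using A'_def Suc.prems by auto
    have sub: "(\<lambda>z. z \<otimes> x) ` A' - A' \<subseteq> {a1}"
    proof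
      fix y assume y: "y \<in> (\<lambda>z. z \<otimes> x) ` A' - A'"
      then obtain a where a: "a \<in> A'" "y = a \<otimes> x" by blast
      have aG: "a \<in> carrier G" using a A'f by auto
      show "y \<in> {a1}"
      proof (cases "y \<in> A")
        case True then show ?thesis using y A'_def by blast
      next
        case False
        then have "y \<in> (\<lambda>z. z \<otimes> x) ` A - A" using a A'_def by blast
        then have "y = c" using c by blast
        then have "a \<otimes> x = a1 \<otimes> x" using a1(2) a(2) by simp
        then have "a = a1" using aG a1G x by simp
        then show ?thesis using a A'_def by blast
      qed
    qed
    have "(\<lambda>z. z \<otimes> x) ` A' - A' \<noteq> {}" by (rule rt_diff_pos[OF A'f x])
    then have eq: "(\<lambda>z. z \<otimes> x) ` A' - A' = {a1}" using sub by blast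
    then have "card ((\<lambda>z. z \<otimes> x) ` A' - A') = 1" by simp
    then have "\<exists>a0\<in>carrier G. A' = {a0 \<otimes> x [^] k | k. k < card A'}"
      by (rule Suc.hyps(1)[OF cA'[symmetric] A'f])
    then obtain a0 where a00: "a0 \<in> carrier G" "A' = {a0 \<otimes> x [^] k | k. k < card A'}" by blast
    have a0: "a0 \<in> carrier G" "A' = {a0 \<otimes> x [^] k | k. k < n}" using a00 cA' by simp_all
    have n1: "n - 1 < n" using False by simp
    have mem: "a0 \<otimes> x [^] (n - 1) \<in> A'" using a0 n1 by blast
    have sn: "Suc (n - 1) = n" using False by simp
    have "x [^] n = x [^] (n - 1) \<otimes> x" using nat_pow_Suc[of x "n - 1"] sn by simp
    then have "a0 \<otimes> x [^] n = (a0 \<otimes> x [^] (n - 1)) \<otimes> x" using a0(1) x(1) by (simp add: m_assoc)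
    then have in1: "a0 \<otimes> x [^] n \<in> (\<lambda>z. z \<otimes> x) ` A'" by (rule image_eqI[where f="\<lambda>z. z \<otimes> x", OF _ mem])
    have in2: "a0 \<otimes> x [^] n \<notin> A'"
    proof
      assume "a0 \<otimes> x [^] n \<in> A'"
      then obtain k where k: "k < n" "a0 \<otimes> x [^] n = a0 \<otimes> x [^] k" using a0 by blast
      then have "x [^] n = x [^] k" using a0 x by simp
      then have "n = k" using pow_inj x by blast
      then show False using k by simp
    qed
    have an: "a0 \<otimes> x [^] n = a1" using in1 in2 eq by blast
    have "A = A' \<union> {a1}" using A'_def a1 by blast
    also have "\<dots> = {a0 \<otimes> x [^] k | k. k < Suc n}" using a0 an setcomp_Suc[of "\<lambda>k. a0 \<otimes> x [^] k" n] by simp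
    finally have "A = {a0 \<otimes> x [^] k | k. k < card A}" using Suc.hyps(2) by simp
    then show ?thesis using a0(1) by blast
  qed
qed

lemma left_prog:
  assumes x: "x \<in> carrier G" "x \<noteq> \<one>"
  shows "finite B \<Longrightarrow> B \<noteq> {} \<Longrightarrow> B \<subseteq> carrier G \<Longrightarrow> card ((\<lambda>z. x \<otimes> z) ` B - B) = 1
    \<Longrightarrow> \<exists>c0\<in>carrier G. B = {x [^] k \<otimes> c0 | k. k < card B}"
proof (induction "card B" arbitrary: B)
  case 0 then show ?case by simp
next
  case (Suc n)
  obtain c where c: "(\<lambda>z. x \<otimes> z) ` B - B = {c}" using Suc.prems(4) card_1_singletonE by blast
  then obtain b1 where b1: "b1 \<in> B" "c = x \<otimes> b1" "c \<notin> B" by blast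
  have b1G: "b1 \<in> carrier G" using b1 Suc.prems by auto
  show ?case
  proof (cases "n = 0")
    case True
    then have "card B = 1" using Suc.hyps(2) by simp
    then obtain y where "B = {y}" by (rule card_1_singletonE)
    then have "B = {b1}" using b1(1) by simp
    then have "B = {x [^] k \<otimes> b1 | k. k < card B}" using b1G by auto
    then show ?thesis using b1G by blast
  next
    case False
    define B' where "B' = B - {b1}"
    have cB': "card B' = n" using B'_def Suc.hyps(2) b1(1) Suc.prems(1) by simp
    have "B' \<noteq> {}"
    proof
      assume "B' = {}"
      then show False using cB' False by simp
    qed
    then have B'f: "finite B'" "B' \<noteq> {}" "B' \<subseteq> carrier G" using B'_def Suc.prems by auto
    have sub: "(\<lambda>z. x \<otimes> z) ` B' - B' \<subseteq> {b1}"
    proof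
      fix y assume y: "y \<in> (\<lambda>z. x \<otimes> z) ` B' - B'"
      then obtain b where b: "b \<in> B'" "y = x \<otimes> b" by blast
      have bG: "b \<in> carrier G" using b B'f by auto
      show "y \<in> {b1}"
      proof (cases "y \<in> B")
        case True then show ?thesis using y B'_def by blast
      next
        case False
        then have "y \<in> (\<lambda>z. x \<otimes> z) ` B - B" using b B'_def by blast
        then have "y = c" using c by blast
        then have "x \<otimes> b = x \<otimes> b1" using b1(2) b(2) by simp
        then have "b = b1" using bG b1G x by simp
        then show ?thesis using b B'_def by blast
      qed
    qed
    have "(\<lambda>z. x \<otimes> z) ` B' - B' \<noteq> {}" by (rule lt_diff_pos[OF B'f x])
    then have eq: "(\<lambda>z. x \<otimes> z) ` B' - B' = {b1}" using sub by blast
    then have "card ((\<lambda>z. x \<otimes> z) ` B' - B') = 1" by simp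
    then have "\<exists>c0\<in>carrier G. B' = {x [^] k \<otimes> c0 | k. k < card B'}"
      by (rule Suc.hyps(1)[OF cB'[symmetric] B'f])
    then obtain c0 where c00: "c0 \<in> carrier G" "B' = {x [^] k \<otimes> c0 | k. k < card B'}" by blast
    have c0: "c0 \<in> carrier G" "B' = {x [^] k \<otimes> c0 | k. k < n}" using c00 cB' by simp_all
    have n1: "n - 1 < n" using False by simp
    have mem: "x [^] (n - 1) \<otimes> c0 \<in> B'" using c0 n1 by blast
    have sn: "Suc (n - 1) = n" using False by simp
    have "x [^] n = x \<otimes> x [^] (n - 1)" using nat_pow_Suc2[of x "n - 1"] sn x(1) by simp
    then have "x [^] n \<otimes> c0 = x \<otimes> (x [^] (n - 1) \<otimes> c0)" using c0(1) x(1) by (simp add: m_assoc)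
    then have in1: "x [^] n \<otimes> c0 \<in> (\<lambda>z. x \<otimes> z) ` B'" by (rule image_eqI[where f="\<lambda>z. x \<otimes> z", OF _ mem])
    have in2: "x [^] n \<otimes> c0 \<notin> B'"
    proof
      assume "x [^] n \<otimes> c0 \<in> B'"
      then obtain k where k: "k < n" "x [^] n \<otimes> c0 = x [^] k \<otimes> c0" using c0 by blast
      then have "x [^] n = x [^] k" using c0 x by simp
      then have "n = k" using pow_inj x by blast
      then show False using k by simp
    qed
    have an: "x [^] n \<otimes> c0 = b1" using in1 in2 eq by blast
    have "B = B' \<union> {b1}" using B'_def b1 by blast
    also have "\<dots> = {x [^] k \<otimes> c0 | k. k < Suc n}" using c0 an setcomp_Suc[of "\<lambda>k. x [^] k \<otimes> c0" n] by simp
    finally have "B = {x [^] k \<otimes> c0 | k. k < card B}" using Suc.hyps(2) by simp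
    then show ?thesis using c0(1) by blast
  qed
qed

lemma conj_pow: "g \<in> carrier G \<Longrightarrow> b \<in> carrier G \<Longrightarrow>
   (inv b \<otimes> g \<otimes> b) [^] (k::nat) = inv b \<otimes> g [^] k \<otimes> b"
proof (induction k)
  case 0 then show ?case by (simp add: m_assoc)
next
  case (Suc k)
  then show ?case by (simp add: m_assoc cancel_l nat_pow_Suc)
qed

lemma geom_ratio:
  assumes G: "\<alpha> \<in> carrier G" "g \<in> carrier G" "\<beta> \<in> carrier G" and g1: "g \<noteq> \<one>" and n: "1 \<le> (n::nat)"
    and A: "A = {\<alpha> \<otimes> g [^] k \<otimes> \<beta> | k. k < n}"
  shows "card ((\<lambda>z. z \<otimes> (inv \<beta> \<otimes> g \<otimes> \<beta>)) ` A - A) = 1"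
proof -
  have step: "(\<alpha> \<otimes> g [^] k \<otimes> \<beta>) \<otimes> (inv \<beta> \<otimes> g \<otimes> \<beta>) = \<alpha> \<otimes> g [^] Suc k \<otimes> \<beta>" for k::nat
    using G by (simp add: m_assoc cancel_l nat_pow_Suc)
  have canc: "\<alpha> \<otimes> g [^] i \<otimes> \<beta> = \<alpha> \<otimes> g [^] j \<otimes> \<beta> \<Longrightarrow> i = j" for i j :: nat
  proof -
    assume "\<alpha> \<otimes> g [^] i \<otimes> \<beta> = \<alpha> \<otimes> g [^] j \<otimes> \<beta>"
    then have "g [^] i = g [^] j" using G by simp
    then show "i = j" using pow_inj G g1 by blast
  qed
  have "(\<lambda>z. z \<otimes> (inv \<beta> \<otimes> g \<otimes> \<beta>)) ` A - A = {\<alpha> \<otimes> g [^] n \<otimes> \<beta>}"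
  proof
    show "(\<lambda>z. z \<otimes> (inv \<beta> \<otimes> g \<otimes> \<beta>)) ` A - A \<subseteq> {\<alpha> \<otimes> g [^] n \<otimes> \<beta>}"
    proof
      fix y assume y: "y \<in> (\<lambda>z. z \<otimes> (inv \<beta> \<otimes> g \<otimes> \<beta>)) ` A - A"
      then obtain k where k: "k < n" "y = \<alpha> \<otimes> g [^] Suc k \<otimes> \<beta>" using A step by auto
      have "\<not> Suc k < n" using y k A by auto
      then have "Suc k = n" using k by simp
      then show "y \<in> {\<alpha> \<otimes> g [^] n \<otimes> \<beta>}" using k by simp
    qed
  next
    have "\<alpha> \<otimes> g [^] (n - 1) \<otimes> \<beta> \<in> A" using A n by auto
    moreover have "(\<alpha> \<otimes> g [^] (n - 1) \<otimes> \<beta>) \<otimes> (inv \<beta> \<otimes> g \<otimes> \<beta>) = \<alpha> \<otimes> g [^] n \<otimes> \<beta>"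
      using step[of "n - 1"] n by simp
    ultimately have "\<alpha> \<otimes> g [^] n \<otimes> \<beta> \<in> (\<lambda>z. z \<otimes> (inv \<beta> \<otimes> g \<otimes> \<beta>)) ` A" by (metis image_eqI)
    moreover have "\<alpha> \<otimes> g [^] n \<otimes> \<beta> \<notin> A"
    proof
      assume "\<alpha> \<otimes> g [^] n \<otimes> \<beta> \<in> A"
      then obtain k where "k < n" "\<alpha> \<otimes> g [^] n \<otimes> \<beta> = \<alpha> \<otimes> g [^] k \<otimes> \<beta>" using A by auto
      then show False using canc by fastforce
    qed
    ultimately show "{\<alpha> \<otimes> g [^] n \<otimes> \<beta>} \<subseteq> (\<lambda>z. z \<otimes> (inv \<beta> \<otimes> g \<otimes> \<beta>)) ` A - A" by blast
  qed
  then show ?thesis by simp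
qed


end

theorem lemma3p9:
  fixes G (structure) and A :: "nat \<Rightarrow> 'a set" and l :: nat
  assumes "group G" and "torsion_free G" and "l \<ge> 2"
    and "\<And>i. i \<in> {1..l} \<Longrightarrow> A i \<subseteq> carrier G"
    and "\<And>i. i \<in> {1..l} \<Longrightarrow> finite (A i)"
    and "\<And>i. i \<in> {1..l} \<Longrightarrow> card (A i) \<ge> 2"
    and "card (prod_sets G A l) + l = (\<Sum>i=1..l. card (A i)) + 1"
  shows "\<exists>g \<in> carrier G. g \<noteq> \<one> \<and>
           (\<exists>\<alpha> \<beta>. (\<forall>i \<in> {1..l}. \<alpha> i \<in> carrier G \<and> \<beta> i \<in> carrier G \<and>
                                  geom_prog G (A i) (\<alpha> i) g (\<beta> i)) \<and>
                  (\<forall>i \<in> {1..<l}. \<alpha> (i + 1) = inv (\<beta> i)))"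
proof -
  interpret tfg G using assms(1,2) by (simp add: tfg_def tfg_axioms_def)
  have Ai: "finite (A i)" "A i \<noteq> {}" "A i \<subseteq> carrier G" "2 \<le> card (A i)" if "1 \<le> i" "i \<le> l" for i
    using assms(4,5,6) that by fastforce+
  define P where "P j = prod_sets G A j" for j
  have P0: "P 0 = {\<one>}" by (simp add: P_def)
  have PS: "P (Suc j) = P j <#> A (Suc j)" for j by (simp add: P_def)
  have Pp: "finite (P j) \<and> P j \<noteq> {} \<and> P j \<subseteq> carrier G" if "j \<le> l" for j
    using that
  proof (induction j)
    case 0 then show ?case using P0 by simp
  next
    case (Suc j)
    then have IH: "finite (P j)" "P j \<noteq> {}" "P j \<subseteq> carrier G" by auto
    have "finite (A (Suc j))" "A (Suc j) \<noteq> {}" "A (Suc j) \<subseteq> carrier G" using Ai Suc.prems by auto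
    then show ?case using IH PS smult_finite smult_ne smult_carrier by simp
  qed
  have stepI: "card (P j) + card (A (Suc j)) \<le> card (P (Suc j)) + 1" if "j < l" for j
  proof -
    have "finite (P j)" "P j \<noteq> {}" "P j \<subseteq> carrier G" using Pp that by auto
    moreover have "finite (A (Suc j))" "A (Suc j) \<noteq> {}" "A (Suc j) \<subseteq> carrier G" using Ai that by auto
    ultimately show ?thesis using ineq PS by simp
  qed
  define E where "E j = int (card (P j)) + int j - (\<Sum>i=1..j. int (card (A i)))" for j
  have E0: "E 0 = 1" using P0 by (simp add: E_def)
  have El: "E l = 1"
  proof -
    have "int (card (P l)) + int l = (\<Sum>i=1..l. int (card (A i))) + 1"
      using assms(7) unfolding P_def by (metis (no_types) of_nat_add of_nat_1 of_nat_sum)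
    then show ?thesis by (simp add: E_def)
  qed
  have Estep: "E j \<le> E (Suc j)" if "j < l" for j
    using stepI[OF that] by (simp add: E_def)
  have Emono: "E j \<le> E k" if "j \<le> k" "k \<le> l" for j k
    using that
  proof (induction k rule: dec_induct)
    case base then show ?case by simp
  next
    case (step k)
    then show ?case using Estep[of k] by simp
  qed
  have tight_step: "card (P (Suc j)) + 1 = card (P j) + card (A (Suc j))" if "j < l" for j
  proof -
    have "E j = 1" using Emono[of 0 j] Emono[of j l] E0 El that by simp
    moreover have "E (Suc j) = 1" using Emono[of 0 "Suc j"] Emono[of "Suc j" l] E0 El that by simp
    ultimately show ?thesis by (simp add: E_def)
  qed
  have consec: "card (A j <#> A (Suc j)) + 1 = card (A j) + card (A (Suc j))" if "1 \<le> j" "j < l" for j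
  proof -
    note jj = that
    obtain i where i: "j = Suc i" using jj by (cases j) auto
    have Pi: "finite (P i)" "P i \<noteq> {}" "P i \<subseteq> carrier G" using Pp i jj by auto
    have Aj: "finite (A j)" "A j \<noteq> {}" "A j \<subseteq> carrier G" using Ai jj by auto
    have Aj1: "finite (A (Suc j))" "A (Suc j) \<noteq> {}" "A (Suc j) \<subseteq> carrier G" using Ai jj by auto
    have "P (Suc j) = P i <#> (A j <#> A (Suc j))"
      using PS[of j] PS[of i] i set_mult_assoc Pi Aj Aj1 by simp
    then have "card (P (Suc j)) = card (P i <#> (A j <#> A (Suc j)))" by simp
    moreover have "card (P i) + card (A j <#> A (Suc j)) \<le> card (P i <#> (A j <#> A (Suc j))) + 1"
      by (rule ineq[OF Pi]) (use Aj Aj1 smult_finite smult_ne smult_carrier in auto)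
    moreover have "card (A j) + card (A (Suc j)) \<le> card (A j <#> A (Suc j)) + 1"
      by (rule ineq[OF Aj Aj1])
    moreover have "card (P (Suc j)) + 1 = card (P j) + card (A (Suc j))" using tight_step jj by simp
    moreover have "card (P j) + 1 = card (P i) + card (A j)" using tight_step[of i] i jj by simp
    ultimately show ?thesis by linarith
  qed
  have A1: "finite (A 1)" "A 1 \<noteq> {}" "A 1 \<subseteq> carrier G" "2 \<le> card (A 1)" using Ai assms(3) by auto
  have A2: "finite (A 2)" "A 2 \<noteq> {}" "A 2 \<subseteq> carrier G" "2 \<le> card (A 2)" using Ai assms(3) by auto
  have t12: "card (A 1 <#> A 2) + 1 = card (A 1) + card (A 2)"
    using consec[of 1] assms(3) by (simp add: numeral_2_eq_2)
  obtain g where g: "g \<in> carrier G" "g \<noteq> \<one>" "card ((\<lambda>z. z \<otimes> g) ` A 1 - A 1) = 1"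
    using T2[OF A1(1) A1(3) A2(1) A2(3) A1(4) A2(4) t12] by blast
  obtain a0 where a0: "a0 \<in> carrier G" "A 1 = {a0 \<otimes> g [^] k | k. k < card (A 1)}"
    using right_prog[OF g(1,2) A1(1,2,3) g(3)] by blast
  define Q where "Q j \<longleftrightarrow> (\<exists>\<alpha> \<beta>. (\<forall>i \<in> {1..j}. \<alpha> i \<in> carrier G \<and> \<beta> i \<in> carrier G \<and>
                                  geom_prog G (A i) (\<alpha> i) g (\<beta> i)) \<and>
                  (\<forall>i \<in> {1..<j}. \<alpha> (i + 1) = inv (\<beta> i)))" for j
  have Q1: "Q 1"
  proof -
    have "geom_prog G (A 1) a0 g \<one>"
      unfolding geom_prog_def using a0 g A1 by simp
    then show ?thesis unfolding Q_def using a0 by (intro exI[of _ "\<lambda>_. a0"] exI[of _ "\<lambda>_. \<one>"]) auto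
  qed
  have Qstep: "Q (Suc j)" if j: "1 \<le> j" "j < l" and Qj: "Q j" for j
  proof -
    obtain \<alpha> \<beta> where ab: "\<forall>i \<in> {1..j}. \<alpha> i \<in> carrier G \<and> \<beta> i \<in> carrier G \<and> geom_prog G (A i) (\<alpha> i) g (\<beta> i)"
      "\<forall>i \<in> {1..<j}. \<alpha> (i + 1) = inv (\<beta> i)"
      using Qj unfolding Q_def by blast
    have abj: "\<alpha> j \<in> carrier G" "\<beta> j \<in> carrier G" "geom_prog G (A j) (\<alpha> j) g (\<beta> j)" using ab(1) j by auto
    have Ajeq: "A j = {\<alpha> j \<otimes> g [^] k \<otimes> \<beta> j | k. k < card (A j)}" using abj(3) unfolding geom_prog_def by blast
    have Aj: "finite (A j)" "A j \<noteq> {}" "A j \<subseteq> carrier G" "2 \<le> card (A j)" using Ai j by auto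
    have Aj1: "finite (A (Suc j))" "A (Suc j) \<noteq> {}" "A (Suc j) \<subseteq> carrier G" "2 \<le> card (A (Suc j))" using Ai j by auto
    define r where "r = inv (\<beta> j) \<otimes> g \<otimes> \<beta> j"
    have rG: "r \<in> carrier G" using r_def abj g by simp
    have rA: "card ((\<lambda>z. z \<otimes> r) ` A j - A j) = 1"
      unfolding r_def by (rule geom_ratio[OF abj(1) g(1) abj(2) g(2) _ Ajeq]) (use Aj in simp)
    have r1: "r \<noteq> \<one>"
    proof
      assume "r = \<one>"
      then have "(\<lambda>z. z \<otimes> r) ` A j = A j" using Aj(3) by (force simp: subset_iff)
      then show False using rA by simp
    qed
    have "card ((\<lambda>z. r \<otimes> z) ` A (Suc j) - A (Suc j)) = 1"
      by (rule III'[OF Aj(1-3) Aj1(1-3) consec[OF j] Aj(4) rG r1 rA])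
    then obtain c where c: "c \<in> carrier G" "A (Suc j) = {r [^] k \<otimes> c | k. k < card (A (Suc j))}"
      using left_prog[OF rG r1 Aj1(1-3)] by blast
    have Aj1eq: "A (Suc j) = {inv (\<beta> j) \<otimes> g [^] k \<otimes> (\<beta> j \<otimes> c) | k. k < card (A (Suc j))}"
    proof -
      have "r [^] k \<otimes> c = inv (\<beta> j) \<otimes> g [^] k \<otimes> (\<beta> j \<otimes> c)" for k::nat
        using conj_pow[OF g(1) abj(2), of k] r_def abj g c by (simp add: m_assoc)
      then show ?thesis using c(2) by simp
    qed
    have gp: "geom_prog G (A (Suc j)) (inv (\<beta> j)) g (\<beta> j \<otimes> c)"
      unfolding geom_prog_def using Aj1eq abj g c Aj1 by simp
    define \<alpha>' where "\<alpha>' = \<alpha>(Suc j := inv (\<beta> j))"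
    define \<beta>' where "\<beta>' = \<beta>(Suc j := \<beta> j \<otimes> c)"
    have P1': "\<forall>i \<in> {1..Suc j}. \<alpha>' i \<in> carrier G \<and> \<beta>' i \<in> carrier G \<and> geom_prog G (A i) (\<alpha>' i) g (\<beta>' i)"
    proof
      fix i assume "i \<in> {1..Suc j}"
      then consider "i \<in> {1..j}" | "i = Suc j" by fastforce
      then show "\<alpha>' i \<in> carrier G \<and> \<beta>' i \<in> carrier G \<and> geom_prog G (A i) (\<alpha>' i) g (\<beta>' i)"
      proof cases
        case 1 then show ?thesis using ab(1) by (auto simp: \<alpha>'_def \<beta>'_def)
      next
        case 2 then show ?thesis using gp abj c by (simp add: \<alpha>'_def \<beta>'_def)
      qed
    qed
    have P2': "\<forall>i \<in> {1..<Suc j}. \<alpha>' (i + 1) = inv (\<beta>' i)"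
    proof
      fix i assume "i \<in> {1..<Suc j}"
      then consider "i \<in> {1..<j}" | "i = j" by fastforce
      then show "\<alpha>' (i + 1) = inv (\<beta>' i)"
      proof cases
        case 1 then show ?thesis using ab(2) by (auto simp: \<alpha>'_def \<beta>'_def)
      next
        case 2 then show ?thesis by (simp add: \<alpha>'_def \<beta>'_def)
      qed
    qed
    show ?thesis unfolding Q_def using P1' P2' by blast
  qed
  have "Q j" if "1 \<le> j" "j \<le> l" for j
    using that
  proof (induction j rule: dec_induct)
    case base then show ?case using Q1 by simp
  next
    case (step j) then show ?case using Qstep by simp
  qed
  then have "Q l" using assms(3) by simp
  then show ?thesis unfolding Q_def using g by blast
qed

end
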